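(* For integers $n\ge1$, $s\ge0$, and $0\le r\le 2n$, let $a(n,s,r)$ be the number of binary sequences $(b_1,\dots,b_{(s+2)n+1})$ of length $(s+2)n+1$ such that (i) for every $j\ge1$, if the pattern $10$ occurs at least $j$ times (as consecutive entries $b_i=1,b_{i+1}=0$), then the $j$th such occurrence has its starting index $i\ge (s+2)j+1$; and (ii) the total number of indices $i$ with $b_i\ne b_{i+1}$ (occurrences of $10$ or $01$) is at most $r$. Then \[ a(n,s,r) = 2\binom{(s+2)n-1}{r} - (s-2)\sum_{i=0}^{r-1}\binom{(s+2)n-1}{i}. \]
   Context: Positions in a binary sequence are indexed starting from $1$. Occurrences of $10$ are counted in order of their starting positions. *)

theory Defs
  imports Main
begin

text \<open>A binary sequence (b_1,...,b_L) is a list b of booleans (True = 1, False = 0),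
  with b_i = b ! (i - 1) (positions indexed from 1).\<close>

definition occ10 :: "bool list \<Rightarrow> nat list" where
  "occ10 b = filter (\<lambda>i. b ! (i - 1) \<and> \<not> b ! i) [1..<length b]"

definition changes :: "bool list \<Rightarrow> nat" where
  "changes b = card {i. 1 \<le> i \<and> i < length b \<and> b ! (i - 1) \<noteq> b ! i}"

definition a_count :: "nat \<Rightarrow> nat \<Rightarrow> nat \<Rightarrow> nat" where
  "a_count n s r = card {b :: bool list. length b = (s + 2) * n + 1 \<and>
     (\<forall>j. 1 \<le> j \<and> j \<le> length (occ10 b) \<longrightarrow> occ10 b ! (j - 1) \<ge> (s + 2) * j + 1) \<and>
     changes b \<le> r}"

end

theory Submission
  imports Defs
begin

definition goodG :: "int \<Rightarrow> int list \<Rightarrow> bool" where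
  "goodG c xs \<longleftrightarrow> (\<forall>j. 1 \<le> j \<and> j \<le> length xs \<longrightarrow> c + sum_list (take j xs) \<ge> 1)"

lemma goodG_Nil[simp]: "goodG c []"
  by (auto simp: goodG_def)

lemma goodG_Cons[simp]: "goodG c (a # xs) \<longleftrightarrow> c + a \<ge> 1 \<and> goodG (c + a) xs"
proof
  assume H: "goodG c (a # xs)"
  have "c + a \<ge> 1" using H[unfolded goodG_def, rule_format, of 1] by simp
  moreover have "goodG (c + a) xs"
    unfolding goodG_def
  proof (intro allI impI)
    fix j assume "1 \<le> j \<and> j \<le> length xs"
    then show "1 \<le> c + a + sum_list (take j xs)"
      using H[unfolded goodG_def, rule_format, of "Suc j"] by (simp add: add.assoc)
  qed
  ultimately show "c + a \<ge> 1 \<and> goodG (c + a) xs" by simp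
next
  assume H: "c + a \<ge> 1 \<and> goodG (c + a) xs"
  show "goodG c (a # xs)"
    unfolding goodG_def
  proof (intro allI impI)
    fix j assume j: "1 \<le> j \<and> j \<le> length (a # xs)"
    then obtain j' where j': "j = Suc j'" by (cases j) auto
    show "1 \<le> c + sum_list (take j (a # xs))"
    proof (cases "j' = 0")
      case True then show ?thesis using H j' by simp
    next
      case False
      then show ?thesis using H[THEN conjunct2, unfolded goodG_def, rule_format, of j'] j j'
        by (simp add: add.assoc)
    qed
  qed
qed

lemma goodG_append: "goodG c (xs @ ys) \<longleftrightarrow> goodG c xs \<and> goodG (c + sum_list xs) ys"
  by (induction xs arbitrary: c) (auto simp: add.assoc)

lemma goodG0_sum: "goodG 0 u \<Longrightarrow> sum_list u \<ge> 0"
proof (cases "u = []")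
  case False
  assume "goodG 0 u"
  then have "0 + sum_list (take (length u) u) \<ge> 1"
    unfolding goodG_def using False by (metis le_refl length_greater_0_conv less_one linorder_not_less)
  then show ?thesis by simp
qed simp

lemma merge_good: "goodG 0 (u @ [1, y] @ v) \<longleftrightarrow> goodG 0 (u @ [y + 1] @ v)"
proof (cases "goodG 0 u")
  case True
  then have "sum_list u \<ge> 0" by (rule goodG0_sum)
  then show ?thesis using True by (simp add: goodG_append algebra_simps)
qed (simp add: goodG_append)

definition cnt :: "int list \<Rightarrow> nat" where
  "cnt x = (\<Sum>t<length x. if goodG 0 (rotate t x) then 1 else 0)"

lemma cnt_rotate1: "cnt (rotate1 x) = cnt x"
proof -
  define f where "f t = (if goodG 0 (rotate t x) then 1 else 0 :: nat)" for t
  define L where "L = length x"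
  have fL: "f L = f 0" unfolding f_def L_def by simp
  have "cnt (rotate1 x) = (\<Sum>t<L. f (Suc t))"
    unfolding cnt_def f_def L_def by (simp add: rotate1_rotate_swap rotate_rotate)
  also have "\<dots> = (\<Sum>t<Suc L. f t) - f 0"
    by (subst sum.lessThan_Suc_shift) simp
  also have "\<dots> = (\<Sum>t<L. f t)"
    using fL by simp
  also have "\<dots> = cnt x" unfolding cnt_def f_def L_def by simp
  finally show ?thesis .
qed

lemma cnt_rotate: "cnt (rotate i x) = cnt x"
  by (induction i) (simp_all add: cnt_rotate1)

lemma sum_list_rotate: "sum_list (rotate n xs) = sum_list (xs :: int list)"
proof -
  have "sum_list (drop k xs @ take k xs) = sum_list xs" for k
    by (metis add.commute append_take_drop_id sum_list_append)
  then show ?thesis by (simp add: rotate_drop_take)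
qed

lemma rotate_replicate: "rotate t (replicate n a) = replicate n a"
  by (induction t) simp_all

lemma rot_two: "i < length rest \<Longrightarrow> rotate (Suc (Suc i)) (a # b # rest) = drop i rest @ [a, b] @ take i rest"
proof -
  assume i: "i < length rest"
  have e: "Suc (Suc i) = i + length [a,b]" by simp
  have "rotate (Suc (Suc i)) (a # b # rest) = rotate i (rotate (length [a,b]) ([a, b] @ rest))"
    by (metis append_Cons append_Nil rotate_rotate e)
  also have "rotate (length [a,b]) ([a, b] @ rest) = rest @ [a, b]"
    by (rule rotate_append)
  also have "rotate i (rest @ [a, b]) = drop i rest @ [a, b] @ take i rest"
    using i by (simp add: rotate_drop_take)
  finally show ?thesis .
qed

lemma rot_one: "i < length rest \<Longrightarrow> rotate (Suc i) (a # rest) = drop i rest @ [a] @ take i rest"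
proof -
  assume i: "i < length rest"
  have "rotate (Suc i) (a # rest) = rotate i (rotate 1 ([a] @ rest))"
    by (simp add: rotate_rotate del: rotate_Suc)
  also have "rotate 1 ([a] @ rest) = rest @ [a]"
    using rotate_append[of "[a]" rest] by simp
  also have "rotate i (rest @ [a]) = drop i rest @ [a] @ take i rest"
    using i by (simp add: rotate_drop_take)
  finally show ?thesis .
qed

lemma exists_break:
  assumes "i0 < length x" "x ! i0 = (1::int)" "j < length x" "x ! j \<noteq> 1"
  shows "\<exists>i<length x. x ! i = 1 \<and> x ! (Suc i mod length x) \<noteq> 1"
proof (rule ccontr)
  assume "\<not> ?thesis"
  then have H: "\<And>i. i < length x \<Longrightarrow> x ! i = 1 \<Longrightarrow> x ! (Suc i mod length x) = 1" by blast
  define L where "L = length x"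
  have L: "L > 0" using assms(1) unfolding L_def by linarith
  have "x ! ((i0 + d) mod L) = 1" for d
  proof (induction d)
    case 0 then show ?case using assms L_def by simp
  next
    case (Suc d)
    have "(i0 + Suc d) mod L = Suc ((i0 + d) mod L) mod L" by (simp add: mod_Suc_eq)
    then show ?case using H[of "(i0 + d) mod L"] Suc L L_def by simp
  qed
  from this[of "j + L - i0"] have "x ! ((j + L) mod L) = 1"
    using assms L_def by (simp add: add.commute)
  then show False using assms L_def by simp
qed

lemma cycle_lemma: "(\<forall>a\<in>set x. a \<le> 1) \<Longrightarrow> cnt x = nat (sum_list x)"
proof (induction "length x" arbitrary: x rule: less_induct)
  case less
  show ?case
  proof (cases "\<forall>a\<in>set x. a = 1")
    case True
    then have xr: "x = replicate (length x) 1" by (simp add: replicate_length_same)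
    have g: "goodG 0 (rotate t x)" for t
      unfolding goodG_def by (subst xr, simp add: rotate_replicate take_replicate sum_list_replicate)
    have "sum_list x = int (length x)"
      by (subst xr) (simp add: sum_list_replicate)
    then show ?thesis using g by (simp add: cnt_def)
  next
    case False
    note F = False
    show ?thesis
    proof (cases "\<forall>a\<in>set x. a \<noteq> 1")
      case True
      have le0: "\<forall>a\<in>set x. a \<le> 0"
      proof
        fix a assume a: "a \<in> set x"
        have "a \<le> 1" using less.prems a by blast
        moreover have "a \<noteq> 1" using True a by blast
        ultimately show "a \<le> 0" by linarith
      qed
      have ng: "\<not> goodG 0 (rotate t x)" if "t < length x" for t
      proof -
        have "length (rotate t x) > 0" using that by (cases x) auto
        then obtain a r where ar: "rotate t x = a # r"
          by (cases "rotate t x") auto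
        have "a \<in> set (rotate t x)" using ar by simp
        then have "a \<in> set x" by simp
        then show ?thesis using ar le0 by auto
      qed
      have "sum_list x \<le> 0" using le0 by (simp add: sum_list_nonpos)
      then show ?thesis using ng by (simp add: cnt_def)
    next
      case False
      obtain i0 where i0: "i0 < length x" "x ! i0 = 1" using False by (metis in_set_conv_nth)
      obtain j where j: "j < length x" "x ! j \<noteq> 1" using F by (metis in_set_conv_nth)
      obtain i where i: "i < length x" "x ! i = 1" "x ! (Suc i mod length x) \<noteq> 1"
        using exists_break[OF i0 j] by blast
      define L where "L = length x"
      have L2: "L \<ge> 2"
      proof (rule ccontr)
        assume "\<not> L \<ge> 2"
        then have "L = 1" using i L_def by linarith
        then show False using i L_def by simp
      qed
      define x' where "x' = rotate i x"
      have lx': "length x' = L" unfolding x'_def L_def by simp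
      have x0: "x' ! 0 = 1" unfolding x'_def using i L2 L_def by (subst nth_rotate) auto
      have x1: "x' ! 1 \<noteq> 1" unfolding x'_def using i L2 L_def by (simp add: nth_rotate add.commute)
      obtain y rest where xy: "x' = 1 # y # rest"
        using lx' L2 x0 by (cases x'; cases "tl x'"; auto)
      have y1: "y \<noteq> 1" using x1 xy by simp
      have yle: "y \<le> 1" using less.prems xy unfolding x'_def by (metis list.set_intros set_rotate)
      have restle: "\<forall>a\<in>set rest. a \<le> 1" using less.prems xy unfolding x'_def
        by (metis list.set_intros(2) set_rotate)
      define red where "red = (y + 1) # rest"
      have redle: "\<forall>a\<in>set red. a \<le> 1" using restle yle y1 red_def by auto
      have lred: "length red < length x" using lx' xy red_def L_def by simp
      have IH: "cnt red = nat (sum_list red)" using less.hyps[OF lred redle] .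
      have sums: "sum_list red = sum_list x"
        using sum_list_rotate[of i x] xy red_def x'_def by simp
      define K where "K = length rest"
      have g0: "goodG 0 (rotate 0 x') = goodG 0 (rotate 0 red)"
        using merge_good[of "[]" y rest] xy red_def by simp
      have g1: "\<not> goodG 0 (rotate 1 x')"
      proof -
        have "rotate 1 x' = y # rest @ [1]" using xy by simp
        then show ?thesis using yle y1 by simp
      qed
      have g2: "goodG 0 (rotate (Suc (Suc k)) x') = goodG 0 (rotate (Suc k) red)" if "k < K" for k
        using that merge_good[of "drop k rest" y "take k rest"] xy red_def K_def
        by (simp only: rot_two rot_one)
      have "cnt x' = (\<Sum>t<Suc (Suc K). if goodG 0 (rotate t x') then 1 else 0)"
        unfolding cnt_def using xy K_def by simp
      also have "\<dots> = (if goodG 0 (rotate 0 x') then 1 else 0) + (if goodG 0 (rotate 1 x') then 1 else 0)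
          + (\<Sum>k<K. if goodG 0 (rotate (Suc (Suc k)) x') then 1 else 0)"
        by (simp only: sum.lessThan_Suc_shift) simp
      also have "\<dots> = (if goodG 0 (rotate 0 red) then 1 else 0)
          + (\<Sum>k<K. if goodG 0 (rotate (Suc k) red) then 1 else 0)"
        using g0 g1 g2 by simp
      also have "\<dots> = cnt red"
        unfolding cnt_def red_def K_def by (simp only: length_Cons sum.lessThan_Suc_shift)
      finally have "cnt x' = cnt red" .
      then show ?thesis using IH sums cnt_rotate[of i x] x'_def by simp
    qed
  qed
qed

fun blk :: "nat \<Rightarrow> nat \<Rightarrow> 'a list \<Rightarrow> 'a list list" where
  "blk m 0 d = []"
| "blk m (Suc n) d = take m d # blk m n (drop m d)"

lemma blk_len[simp]: "length (blk m n d) = n"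
  by (induction n arbitrary: d) auto

lemma blk_elem: "length d = m * n \<Longrightarrow> B \<in> set (blk m n d) \<Longrightarrow> length B = m"
proof (induction n arbitrary: d)
  case (Suc n)
  have "length (drop m d) = m * n" using Suc.prems by simp
  note IH = Suc.IH[OF this]
  show ?case using IH Suc.prems by auto
qed simp

lemma concat_blk: "length d = m * n \<Longrightarrow> concat (blk m n d) = d"
  by (induction n arbitrary: d) (auto simp: algebra_simps)

lemma blk_concat: "length bs = n \<Longrightarrow> \<forall>B\<in>set bs. length B = m \<Longrightarrow> blk m n (concat bs) = bs"
  by (induction bs arbitrary: n) auto

lemma rot_concat1: "\<forall>B\<in>set cs. length B = m \<Longrightarrow> rotate m (concat cs) = concat (rotate1 cs)"
proof (cases cs)
  case (Cons c cs')
  assume "\<forall>B\<in>set cs. length B = m"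
  then have "length c = m" using Cons by simp
  then show ?thesis using Cons rotate_append[of c "concat cs'"] by simp
qed simp

lemma rot_concat: "\<forall>B\<in>set bs. length B = m \<Longrightarrow> rotate (m * t) (concat bs) = concat (rotate t bs)"
proof (induction t)
  case (Suc t)
  have "rotate (m * Suc t) (concat bs) = rotate m (rotate (m * t) (concat bs))"
    by (simp add: rotate_rotate add.commute)
  also have "\<dots> = rotate m (concat (rotate t bs))" using Suc by simp
  also have "\<dots> = concat (rotate1 (rotate t bs))"
    using Suc.prems by (intro rot_concat1) simp
  finally show ?case by simp
qed simp

lemma take_concat_blocks: "\<forall>B\<in>set bs. length B = m \<Longrightarrow> take (m * p) (concat bs) = concat (take p bs)"
proof (induction bs arbitrary: p)
  case (Cons B bs)
  show ?case
  proof (cases p)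
    case (Suc q)
    have "m * p = length B + m * q" using Cons.prems Suc by simp
    then show ?thesis using Cons Suc by simp
  qed simp
qed simp

definition cb :: "bool list \<Rightarrow> nat" where "cb B = length (filter id B)"

lemma cb_append[simp]: "cb (a @ b) = cb a + cb b" by (simp add: cb_def)
lemma cb_concat: "cb (concat bs) = sum_list (map cb bs)" by (induction bs) (simp_all add: cb_def)

lemma cb_rotate[simp]: "cb (rotate n xs) = cb xs"
proof -
  have "cb (drop k xs @ take k xs) = cb xs" for k
    by (metis add.commute append_take_drop_id cb_append)
  then show ?thesis by (simp add: rotate_drop_take)
qed

definition fB :: "bool list \<Rightarrow> int list" where "fB B = [1, 1 - int (cb B)]"
definition gB :: "bool list \<Rightarrow> int list" where "gB B = [1 - int (cb B), 1]"

lemma fg_aux: "concat (map fB bs) @ [1] = 1 # concat (map gB bs)"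
  by (induction bs) (auto simp: fB_def gB_def)

lemma rot1_fg: "rotate1 (concat (map fB bs)) = concat (map gB bs)"
proof (cases bs)
  case (Cons B bs')
  then show ?thesis using fg_aux[of bs'] by (simp add: fB_def gB_def)
qed simp

lemma all_less_Suc: "(\<forall>p<Suc n. P p) \<longleftrightarrow> P 0 \<and> (\<forall>p<n. P (Suc p))"
  by (auto simp: less_Suc_eq_0_disj)

lemma good_f: "c \<ge> 0 \<Longrightarrow> goodG c (concat (map fB bs)) \<longleftrightarrow>
   (\<forall>p<length bs. c + 2 * int (Suc p) - int (sum_list (map cb (take (Suc p) bs))) \<ge> 1)"
proof (induction bs arbitrary: c)
  case (Cons B bs)
  define c' where "c' = c + 2 - int (cb B)"
  have "goodG c (concat (map fB (B # bs))) \<longleftrightarrow> c' \<ge> 1 \<and> goodG c' (concat (map fB bs))"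
    using Cons.prems by (simp add: fB_def c'_def algebra_simps)
  also have "\<dots> \<longleftrightarrow> c' \<ge> 1 \<and> (\<forall>p<length bs. c' + 2 * int (Suc p) - int (sum_list (map cb (take (Suc p) bs))) \<ge> 1)"
    using Cons.IH[of c'] by auto
  also have "\<dots> \<longleftrightarrow> (\<forall>p<length (B # bs). c + 2 * int (Suc p) - int (sum_list (map cb (take (Suc p) (B # bs)))) \<ge> 1)"
    by (simp only: length_Cons all_less_Suc) (simp add: c'_def algebra_simps)
  finally show ?case .
qed simp

lemma good_g: "goodG c (concat (map gB bs)) \<longleftrightarrow>
   (\<forall>p<length bs. c + 2 * int (Suc p) - int (sum_list (map cb (take (Suc p) bs))) \<ge> 2)"
proof (induction bs arbitrary: c)
  case (Cons B bs)
  define c' where "c' = c + 2 - int (cb B)"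
  have "goodG c (concat (map gB (B # bs))) \<longleftrightarrow> c' \<ge> 2 \<and> goodG c' (concat (map gB bs))"
    by (auto simp: gB_def c'_def algebra_simps)
  also have "\<dots> \<longleftrightarrow> c' \<ge> 2 \<and> (\<forall>p<length bs. c' + 2 * int (Suc p) - int (sum_list (map cb (take (Suc p) bs))) \<ge> 2)"
    using Cons.IH[of c'] by auto
  also have "\<dots> \<longleftrightarrow> (\<forall>p<length (B # bs). c + 2 * int (Suc p) - int (sum_list (map cb (take (Suc p) (B # bs)))) \<ge> 2)"
    by (simp only: length_Cons all_less_Suc) (simp add: c'_def algebra_simps)
  finally show ?case .
qed simp

lemma sum_f: "sum_list (concat (map fB bs)) = 2 * int (length bs) - int (cb (concat bs))"
  by (induction bs) (auto simp: fB_def cb_def)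

lemma le1_f: "\<forall>a\<in>set (concat (map fB bs)). a \<le> 1"
  by (auto simp: fB_def)

lemma len_f: "length (concat (map fB bs)) = 2 * length bs"
  by (induction bs) (auto simp: fB_def)

lemma sum_split2: "(\<Sum>u<2 * n. h u) = (\<Sum>t<n. h (2 * t) + h (Suc (2 * t)) :: nat)"
  by (induction n) simp_all

definition G :: "nat \<Rightarrow> nat \<Rightarrow> bool \<Rightarrow> bool list \<Rightarrow> bool" where
  "G m n x d \<longleftrightarrow> (\<forall>p. 1 \<le> p \<and> p \<le> n \<longrightarrow> cb (take (m * p) d) + (if x then 1 else 0) \<le> 2 * p - 1)"

definition zz :: "nat \<Rightarrow> nat \<Rightarrow> bool list \<Rightarrow> int list" where
  "zz m n d = concat (map fB (blk m n d))"

lemma reidx: "(\<forall>p. 1 \<le> p \<and> p \<le> n \<longrightarrow> P p) \<longleftrightarrow> (\<forall>p<n. P (Suc p))"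
proof
  assume "\<forall>p. 1 \<le> p \<and> p \<le> n \<longrightarrow> P p"
  then show "\<forall>p<n. P (Suc p)" by simp
next
  assume H: "\<forall>p<n. P (Suc p)"
  show "\<forall>p. 1 \<le> p \<and> p \<le> n \<longrightarrow> P p"
  proof (intro allI impI)
    fix p assume p: "1 \<le> p \<and> p \<le> n"
    then obtain q where "p = Suc q" by (cases p) auto
    then show "P p" using H p by simp
  qed
qed

lemma S_eq: "length d = m * n \<Longrightarrow> cb (take (m * q) d) = sum_list (map cb (take q (blk m n d)))"
proof -
  assume l: "length d = m * n"
  have "take (m * q) d = concat (take q (blk m n d))"
    using take_concat_blocks[of "blk m n d" m q] blk_elem[OF l] concat_blk[OF l] by simp
  then show ?thesis by (simp add: cb_concat)
qed

lemma G_F: "length d = m * n \<Longrightarrow> G m n False d \<longleftrightarrow> goodG 0 (zz m n d)"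
proof -
  assume l: "length d = m * n"
  have "goodG 0 (zz m n d) \<longleftrightarrow> (\<forall>p<n. 0 + 2 * int (Suc p) - int (sum_list (map cb (take (Suc p) (blk m n d)))) \<ge> 1)"
    unfolding zz_def by (subst good_f) simp_all
  also have "\<dots> \<longleftrightarrow> (\<forall>p<n. cb (take (m * Suc p) d) + 0 \<le> 2 * Suc p - 1)"
  proof -
    have "(0 + 2 * int (Suc p) - int (sum_list (map cb (take (Suc p) (blk m n d)))) \<ge> 1)
       \<longleftrightarrow> (cb (take (m * Suc p) d) + 0 \<le> 2 * Suc p - 1)" for p
      unfolding S_eq[OF l] by arith
    then show ?thesis by simp
  qed
  also have "\<dots> \<longleftrightarrow> G m n False d"
    unfolding G_def by (simp only: reidx) simp
  finally show ?thesis by simp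
qed

lemma G_T: "length d = m * n \<Longrightarrow> G m n True d \<longleftrightarrow> goodG 0 (rotate1 (zz m n d))"
proof -
  assume l: "length d = m * n"
  have "goodG 0 (rotate1 (zz m n d)) \<longleftrightarrow> (\<forall>p<n. 0 + 2 * int (Suc p) - int (sum_list (map cb (take (Suc p) (blk m n d)))) \<ge> 2)"
    unfolding zz_def rot1_fg by (subst good_g) simp
  also have "\<dots> \<longleftrightarrow> (\<forall>p<n. cb (take (m * Suc p) d) + 1 \<le> 2 * Suc p - 1)"
  proof -
    have "(0 + 2 * int (Suc p) - int (sum_list (map cb (take (Suc p) (blk m n d)))) \<ge> 2)
       \<longleftrightarrow> (cb (take (m * Suc p) d) + 1 \<le> 2 * Suc p - 1)" for p
      unfolding S_eq[OF l] by arith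
    then show ?thesis by simp
  qed
  also have "\<dots> \<longleftrightarrow> G m n True d"
    unfolding G_def by (simp only: reidx) simp
  finally show ?thesis by simp
qed

lemma zz_rot: "length d = m * n \<Longrightarrow> zz m n (rotate (m * t) d) = rotate (2 * t) (zz m n d)"
proof -
  assume l: "length d = m * n"
  define bs where "bs = blk m n d"
  have el: "\<forall>B\<in>set bs. length B = m" using blk_elem[OF l] bs_def by auto
  have "rotate (m * t) d = concat (rotate t bs)"
    using rot_concat[OF el, of t] concat_blk[OF l] bs_def by simp
  then have "blk m n (rotate (m * t) d) = rotate t bs"
    using blk_concat[of "rotate t bs" n m] el bs_def by simp
  then have "zz m n (rotate (m * t) d) = concat (rotate t (map fB bs))"
    unfolding zz_def by (simp add: rotate_map)
  also have "\<dots> = rotate (2 * t) (concat (map fB bs))"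
    by (rule rot_concat[symmetric]) (auto simp: fB_def)
  finally show ?thesis unfolding zz_def bs_def .
qed

lemma per_d:
  assumes l: "length d = m * n" and k: "cb d = k" "k \<le> 2 * n"
  shows "(\<Sum>t<n. (if G m n False (rotate (m * t) d) then 1 else 0)
             + (if G m n True (rotate (m * t) d) then 1 else 0)) = 2 * n - k"
proof -
  define z where "z = zz m n d"
  have lz: "length z = 2 * n" unfolding z_def zz_def by (simp add: len_f)
  have sz: "sum_list z = 2 * int n - int k"
    unfolding z_def zz_def using sum_f concat_blk[OF l] k by simp
  have "cnt z = nat (sum_list z)" by (rule cycle_lemma) (simp add: z_def zz_def le1_f)
  then have c: "cnt z = 2 * n - k" using sz k by simp
  have lr: "length (rotate (m * t) d) = m * n" for t using l by simp
  have "cnt z = (\<Sum>u<2 * n. if goodG 0 (rotate u z) then 1 else 0)"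
    unfolding cnt_def lz ..
  also have "\<dots> = (\<Sum>t<n. (if goodG 0 (rotate (2 * t) z) then 1 else 0)
        + (if goodG 0 (rotate (Suc (2 * t)) z) then 1 else 0))"
    by (rule sum_split2)
  also have "\<dots> = (\<Sum>t<n. (if G m n False (rotate (m * t) d) then 1 else 0)
             + (if G m n True (rotate (m * t) d) then 1 else 0))"
    using G_F[OF lr] G_T[OF lr] zz_rot[OF l] z_def by simp
  finally show ?thesis using c by simp
qed

lemma finite_len: "finite {d :: bool list. length d = N \<and> Q d}"
proof -
  have "{d :: bool list. length d = N \<and> Q d} \<subseteq> {xs. set xs \<subseteq> UNIV \<and> length xs = N}" by auto
  moreover have "finite {xs :: bool list. set xs \<subseteq> UNIV \<and> length xs = N}"
    by (rule finite_lists_length_eq) simp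
  ultimately show ?thesis by (rule finite_subset)
qed

lemma card_Sk: "card {d :: bool list. length d = N \<and> cb d = k} = N choose k"
proof -
  define phi where "phi d = {i. i < N \<and> d ! i}" for d :: "bool list"
  have "bij_betw phi {d. length d = N \<and> cb d = k} {A. A \<subseteq> {..<N} \<and> card A = k}"
  proof (rule bij_betw_imageI)
    show "inj_on phi {d. length d = N \<and> cb d = k}"
    proof (rule inj_onI)
      fix a b assume a: "a \<in> {d. length d = N \<and> cb d = k}" and b: "b \<in> {d. length d = N \<and> cb d = k}"
        and e: "phi a = phi b"
      show "a = b"
      proof (rule nth_equalityI)
        show "length a = length b" using a b by simp
        fix i assume "i < length a"
        then show "a ! i = b ! i" using e a unfolding phi_def by (auto simp: set_eq_iff)
      qed
    qed
    have cbphi: "cb d = card (phi d)" if "length d = N" for d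
      unfolding cb_def phi_def using that by (simp add: length_filter_conv_card)
    show "phi ` {d. length d = N \<and> cb d = k} = {A. A \<subseteq> {..<N} \<and> card A = k}"
    proof
      show "phi ` {d. length d = N \<and> cb d = k} \<subseteq> {A. A \<subseteq> {..<N} \<and> card A = k}"
        using cbphi by (auto simp: phi_def)
      show "{A. A \<subseteq> {..<N} \<and> card A = k} \<subseteq> phi ` {d. length d = N \<and> cb d = k}"
      proof
        fix A assume A: "A \<in> {A. A \<subseteq> {..<N} \<and> card A = k}"
        define d where "d = map (\<lambda>i. i \<in> A) [0..<N]"
        have pd: "phi d = A" using A unfolding phi_def d_def by auto
        have "length d = N" unfolding d_def by simp
        then have "cb d = k" using cbphi pd A by simp
        then show "A \<in> phi ` {d. length d = N \<and> cb d = k}"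
          using pd \<open>length d = N\<close> by force
      qed
    qed
  qed
  then have "card {d :: bool list. length d = N \<and> cb d = k} = card {A. A \<subseteq> {..<N} \<and> card A = k}"
    by (rule bij_betw_same_card)
  also have "\<dots> = N choose k" using n_subsets[of "{..<N}" k] by simp
  finally show ?thesis .
qed

lemma inj_rotate: "inj (rotate k)"
  unfolding rotate_def by (rule inj_fn) (rule inj_rotate1)

lemma rot_card:
  assumes n: "n \<ge> 1"
  shows "card {d. (length d = m * n \<and> cb d = k) \<and> P (rotate (m * t) d)}
       = card {d. (length d = m * n \<and> cb d = k) \<and> P d}"
proof -
  let ?A = "{d. (length d = m * n \<and> cb d = k) \<and> P (rotate (m * t) d)}"
  let ?B = "{d. (length d = m * n \<and> cb d = k) \<and> P d}"
  have "rotate (m * t) ` ?A = ?B"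
  proof
    show "rotate (m * t) ` ?A \<subseteq> ?B" by auto
    show "?B \<subseteq> rotate (m * t) ` ?A"
    proof
      fix e assume e: "e \<in> ?B"
      have le: "m * t \<le> m * n * t" using n by simp
      define e' where "e' = rotate (m * n * t - m * t) e"
      have "rotate (m * t) e' = rotate (m * n * t) e"
        unfolding e'_def rotate_rotate using le by simp
      also have "\<dots> = e" using e by (intro rotate_id) simp
      finally have r: "rotate (m * t) e' = e" .
      have eA: "e' \<in> ?A"
      proof -
        have "length e' = m * n \<and> cb e' = k" using e unfolding e'_def by simp
        moreover have "P (rotate (m * t) e')" using e \<open>rotate (m * t) e' = e\<close> by simp
        ultimately show ?thesis by simp
      qed
      show "e \<in> rotate (m * t) ` ?A"
      proof (rule image_eqI[where x = e'])
        show "e = rotate (m * t) e'" using r by simp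
        show "e' \<in> ?A" by (rule eA)
      qed
    qed
  qed
  moreover have "inj_on (rotate (m * t)) ?A" using inj_rotate by (rule inj_on_subset) simp
  then have "card (rotate (m * t) ` ?A) = card ?A" by (rule card_image)
  ultimately show ?thesis by simp
qed

lemma main_count:
  assumes n: "n \<ge> 1" and k: "k \<le> 2 * n"
  shows "n * (card {d. (length d = m * n \<and> cb d = k) \<and> G m n False d}
             + card {d. (length d = m * n \<and> cb d = k) \<and> G m n True d})
         = (2 * n - k) * (m * n choose k)"
proof -
  define S where "S = {d :: bool list. length d = m * n \<and> cb d = k}"
  have fS: "finite S" unfolding S_def by (rule finite_len)
  define h where "h x t d = (if G m n x (rotate (m * t) d) then 1 else 0 :: nat)" for x t d
  have "(\<Sum>d\<in>S. \<Sum>t<n. h False t d + h True t d) = (\<Sum>d\<in>S. 2 * n - k)"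
  proof (rule sum.cong)
    fix d assume "d \<in> S"
    then have "length d = m * n" "cb d = k" unfolding S_def by auto
    from per_d[OF this k(1)] show "(\<Sum>t<n. h False t d + h True t d) = 2 * n - k"
      unfolding h_def .
  qed simp
  also have "\<dots> = (2 * n - k) * (m * n choose k)"
    using card_Sk[of "m * n" k] unfolding S_def by simp
  finally have 1: "(\<Sum>d\<in>S. \<Sum>t<n. h False t d + h True t d) = (2 * n - k) * (m * n choose k)" .
  have cx: "(\<Sum>d\<in>S. h x t d) = card {d. (length d = m * n \<and> cb d = k) \<and> G m n x d}" for x t
  proof -
    have "(\<Sum>d\<in>S. h x t d) = card {d \<in> S. G m n x (rotate (m * t) d)}"
      unfolding h_def using fS by (simp add: sum.If_cases Int_def)
    also have "\<dots> = card {d. (length d = m * n \<and> cb d = k) \<and> G m n x (rotate (m * t) d)}"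
      unfolding S_def by simp
    also have "\<dots> = card {d. (length d = m * n \<and> cb d = k) \<and> G m n x d}"
      by (rule rot_card[OF n])
    finally show ?thesis .
  qed
  have "(\<Sum>d\<in>S. \<Sum>t<n. h False t d + h True t d) = (\<Sum>t<n. \<Sum>d\<in>S. h False t d + h True t d)"
    by (rule sum.swap)
  also have "\<dots> = (\<Sum>t<n. (\<Sum>d\<in>S. h False t d) + (\<Sum>d\<in>S. h True t d))"
    by (simp add: sum.distrib)
  also have "\<dots> = n * (card {d. (length d = m * n \<and> cb d = k) \<and> G m n False d}
             + card {d. (length d = m * n \<and> cb d = k) \<and> G m n True d})"
    using cx by simp
  finally show ?thesis using 1 by simp
qed

definition ten :: "bool list \<Rightarrow> nat \<Rightarrow> nat" where
  "ten b q = card {i. 1 \<le> i \<and> i \<le> q \<and> b ! (i - 1) \<and> \<not> b ! i}"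
definition chg :: "bool list \<Rightarrow> nat \<Rightarrow> nat" where
  "chg b q = card {i. 1 \<le> i \<and> i \<le> q \<and> b ! (i - 1) \<noteq> b ! i}"

lemma card_Suc_step: "card {i. 1 \<le> i \<and> i \<le> Suc q \<and> P i} = card {i. 1 \<le> i \<and> i \<le> q \<and> P i} + (if P (Suc q) then 1 else 0)"
proof -
  have fin: "finite {i. 1 \<le> i \<and> i \<le> q \<and> P i}" by (rule finite_subset[of _ "{..q}"]) auto
  show ?thesis
  proof (cases "P (Suc q)")
    case True
    then have "{i. 1 \<le> i \<and> i \<le> Suc q \<and> P i} = insert (Suc q) {i. 1 \<le> i \<and> i \<le> q \<and> P i}"
      by (auto simp: le_Suc_eq)
    then show ?thesis using fin True by simp
  next
    case False
    then have "{i. 1 \<le> i \<and> i \<le> Suc q \<and> P i} = {i. 1 \<le> i \<and> i \<le> q \<and> P i}"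
      by (auto simp: le_Suc_eq)
    then show ?thesis using False by simp
  qed
qed

lemma parity: "2 * ten b q + (if b ! q then 1 else 0) = chg b q + (if b ! 0 then 1 else 0)"
proof (induction q)
  case 0
  have "ten b 0 = 0" "chg b 0 = 0" unfolding ten_def chg_def by auto
  then show ?case by simp
next
  case (Suc q)
  show ?case
    unfolding ten_def chg_def card_Suc_step
    using Suc unfolding ten_def chg_def by auto
qed

lemma ten_le_iff: "1 \<le> p \<Longrightarrow> ten b q \<le> p - 1 \<longleftrightarrow> chg b q + (if b ! 0 then 1 else 0) \<le> 2 * p - 1"
  using parity[of b q] by (cases "b ! q"; cases "b ! 0") auto

lemma sorted_nth_filter:
  "sorted xs \<Longrightarrow> j < length xs \<Longrightarrow> (xs ! j \<le> (a::nat) \<longleftrightarrow> j < length (filter (\<lambda>x. x \<le> a) xs))"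
proof (induction xs arbitrary: j)
  case (Cons x xs)
  show ?case
  proof (cases "x \<le> a")
    case True
    then show ?thesis using Cons by (cases j) auto
  next
    case False
    then have "filter (\<lambda>x. x \<le> a) xs = []" using Cons.prems(1) by (auto simp: filter_empty_conv)
    moreover have "(x # xs) ! j \<ge> x" using Cons.prems
      by (cases j) (auto simp: nth_mem)
    ultimately show ?thesis using False by auto
  qed
qed simp

lemma occ_filter_len:
  assumes "q < length b"
  shows "length (filter (\<lambda>x. x \<le> q) (occ10 b)) = ten b q"
proof -
  have "length (filter (\<lambda>x. x \<le> q) (occ10 b))
      = length (filter (\<lambda>i. (b ! (i - 1) \<and> \<not> b ! i) \<and> i \<le> q) [1..<length b])"
    unfolding occ10_def by (simp add: conj_commute)
  also have "\<dots> = card (set (filter (\<lambda>i. (b ! (i - 1) \<and> \<not> b ! i) \<and> i \<le> q) [1..<length b]))"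
    by (rule distinct_card[symmetric]) simp
  also have "set (filter (\<lambda>i. (b ! (i - 1) \<and> \<not> b ! i) \<and> i \<le> q) [1..<length b])
      = {i. 1 \<le> i \<and> i \<le> q \<and> b ! (i - 1) \<and> \<not> b ! i}"
    using assms by auto
  finally show ?thesis unfolding ten_def .
qed

lemma occ_le: "x \<in> set (occ10 b) \<Longrightarrow> x < length b"
  unfolding occ10_def by auto

lemma occ_sorted: "sorted (occ10 b)"
  unfolding occ10_def by (simp add: sorted_filter[where f = id, simplified])

lemma cond_iff:
  assumes lb: "length b = m * n + 1" and n: "n \<ge> 1"
  shows "(\<forall>j. 1 \<le> j \<and> j \<le> length (occ10 b) \<longrightarrow> occ10 b ! (j - 1) \<ge> m * j + 1)
     \<longleftrightarrow> (\<forall>p. 1 \<le> p \<and> p \<le> n \<longrightarrow> ten b (m * p) \<le> p - 1)"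
proof
  assume H: "\<forall>j. 1 \<le> j \<and> j \<le> length (occ10 b) \<longrightarrow> occ10 b ! (j - 1) \<ge> m * j + 1"
  show "\<forall>p. 1 \<le> p \<and> p \<le> n \<longrightarrow> ten b (m * p) \<le> p - 1"
  proof (intro allI impI)
    fix p assume p: "1 \<le> p \<and> p \<le> n"
    show "ten b (m * p) \<le> p - 1"
    proof (rule ccontr)
      assume "\<not> ten b (m * p) \<le> p - 1"
      then have tp: "p - 1 < ten b (m * p)" by simp
      have mp: "m * p < length b" using lb p by (simp add: mult_le_mono2 le_imp_less_Suc)
      have fl: "p - 1 < length (filter (\<lambda>x. x \<le> m * p) (occ10 b))"
        using tp occ_filter_len[OF mp] by simp
      then have pl: "p - 1 < length (occ10 b)"
        using length_filter_le[of "\<lambda>x. x \<le> m * p" "occ10 b"] by linarith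
      have "occ10 b ! (p - 1) \<le> m * p"
        using sorted_nth_filter[OF occ_sorted pl] fl by simp
      moreover have "occ10 b ! (p - 1) \<ge> m * p + 1" using H p pl by auto
      ultimately show False by simp
    qed
  qed
next
  assume H: "\<forall>p. 1 \<le> p \<and> p \<le> n \<longrightarrow> ten b (m * p) \<le> p - 1"
  show "\<forall>j. 1 \<le> j \<and> j \<le> length (occ10 b) \<longrightarrow> occ10 b ! (j - 1) \<ge> m * j + 1"
  proof (intro allI impI)
    fix j assume j: "1 \<le> j \<and> j \<le> length (occ10 b)"
    show "occ10 b ! (j - 1) \<ge> m * j + 1"
    proof (rule ccontr)
      assume "\<not> ?thesis"
      then have le: "occ10 b ! (j - 1) \<le> m * j" by simp
      have jl: "j - 1 < length (occ10 b)" using j by linarith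
      show False
      proof (cases "j \<le> n")
        case True
        have mj: "m * j < length b" using lb True by (simp add: mult_le_mono2 le_imp_less_Suc)
        have "j - 1 < length (filter (\<lambda>x. x \<le> m * j) (occ10 b))"
          using sorted_nth_filter[OF occ_sorted jl] le by simp
        then have "j - 1 < ten b (m * j)" using occ_filter_len[OF mj] by simp
        then show False using H j True by fastforce
      next
        case False
        have mn: "m * n < length b" using lb by simp
        have "filter (\<lambda>x. x \<le> m * n) (occ10 b) = occ10 b"
          using occ_le lb by (intro filter_True) fastforce
        then have "ten b (m * n) = length (occ10 b)" using occ_filter_len[OF mn] by simp
        then have "ten b (m * n) \<ge> n + 1" using j False by simp
        then show False using H n by fastforce
      qed
    qed
  qed
qed

fun dl :: "bool list \<Rightarrow> bool list" where
  "dl (a # b # r) = (a \<noteq> b) # dl (b # r)"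
| "dl _ = []"

fun mk :: "bool \<Rightarrow> bool list \<Rightarrow> bool list" where
  "mk x [] = [x]"
| "mk x (c # cs) = x # mk (x \<noteq> c) cs"

lemma length_dl[simp]: "length (dl b) = length b - 1"
  by (induction b rule: dl.induct) auto

lemma nth_dl: "i < length b - 1 \<Longrightarrow> dl b ! i = (b ! i \<noteq> b ! Suc i)"
proof (induction b arbitrary: i rule: dl.induct)
  case (1 a b r)
  then show ?case by (cases i) auto
qed auto

lemma length_mk[simp]: "length (mk x d) = Suc (length d)"
  by (induction d arbitrary: x) auto

lemma mk_hd[simp]: "mk x d ! 0 = x"
  by (cases d) auto

lemma mk_Cons: "\<exists>t. mk x d = x # t"
  by (cases d) auto

lemma dl_mk[simp]: "dl (mk x d) = d"
proof (induction d arbitrary: x)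
  case (Cons c cs)
  obtain t where t: "mk (x \<noteq> c) cs = (x \<noteq> c) # t" using mk_Cons by blast
  have "dl (mk x (c # cs)) = dl (x # (x \<noteq> c) # t)" using t by (simp only: mk.simps)
  also have "\<dots> = (x \<noteq> (x \<noteq> c)) # dl ((x \<noteq> c) # t)" by (simp only: dl.simps)
  also have "dl ((x \<noteq> c) # t) = cs" using Cons.IH[of "x \<noteq> c"] t by (simp only:)
  also have "(x \<noteq> (x \<noteq> c)) = c" by auto
  finally show ?case .
qed simp

lemma mk_dl: "b \<noteq> [] \<Longrightarrow> mk (b ! 0) (dl b) = b"
proof (induction b rule: dl.induct)
  case (1 a b r)
  have e: "(a \<noteq> (a \<noteq> b)) = b" by auto
  have "mk ((a # b # r) ! 0) (dl (a # b # r)) = a # mk (a \<noteq> (a \<noteq> b)) (dl (b # r))"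
    by (simp only: dl.simps mk.simps nth_Cons_0)
  also have "\<dots> = a # mk b (dl (b # r))" by (simp only: e)
  also have "mk b (dl (b # r)) = b # r" using 1 by simp
  finally show ?case .
qed auto

lemma chg_cb: "q \<le> length b - 1 \<Longrightarrow> chg b q = cb (take q (dl b))"
proof -
  assume q: "q \<le> length b - 1"
  have "cb (take q (dl b)) = card {i. i < q \<and> take q (dl b) ! i}"
    unfolding cb_def using q by (simp add: length_filter_conv_card min_def)
  also have "\<dots> = card {i. i < q \<and> b ! i \<noteq> b ! Suc i}"
    using q by (intro arg_cong[where f = card]) (auto simp: nth_dl)
  also have "\<dots> = card (Suc ` {i. i < q \<and> b ! i \<noteq> b ! Suc i})"
    by (rule card_image[symmetric]) simp
  also have "Suc ` {i. i < q \<and> b ! i \<noteq> b ! Suc i} = {i. 1 \<le> i \<and> i \<le> q \<and> b ! (i - 1) \<noteq> b ! i}"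
  proof
    show "Suc ` {i. i < q \<and> b ! i \<noteq> b ! Suc i} \<subseteq> {i. 1 \<le> i \<and> i \<le> q \<and> b ! (i - 1) \<noteq> b ! i}"
      by auto
    show "{i. 1 \<le> i \<and> i \<le> q \<and> b ! (i - 1) \<noteq> b ! i} \<subseteq> Suc ` {i. i < q \<and> b ! i \<noteq> b ! Suc i}"
    proof
      fix i assume i: "i \<in> {i. 1 \<le> i \<and> i \<le> q \<and> b ! (i - 1) \<noteq> b ! i}"
      then obtain j where "i = Suc j" by (cases i) auto
      then show "i \<in> Suc ` {i. i < q \<and> b ! i \<noteq> b ! Suc i}" using i by auto
    qed
  qed
  finally show ?thesis unfolding chg_def by simp
qed

lemma changes_chg: "changes b = chg b (length b - 1)"
  unfolding changes_def chg_def by (intro arg_cong[where f = card]) auto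

lemma mem_iff:
  assumes n: "n \<ge> 1" and lb: "length b = m * n + 1"
  shows "((\<forall>j. 1 \<le> j \<and> j \<le> length (occ10 b) \<longrightarrow> occ10 b ! (j - 1) \<ge> m * j + 1) \<and> changes b \<le> r)
     \<longleftrightarrow> G m n (b ! 0) (dl b) \<and> cb (dl b) \<le> r"
proof -
  have A: "(\<forall>j. 1 \<le> j \<and> j \<le> length (occ10 b) \<longrightarrow> occ10 b ! (j - 1) \<ge> m * j + 1)
     \<longleftrightarrow> (\<forall>p. 1 \<le> p \<and> p \<le> n \<longrightarrow> ten b (m * p) \<le> p - 1)" by (rule cond_iff[OF lb n])
  also have "\<dots> \<longleftrightarrow> G m n (b ! 0) (dl b)"
    unfolding G_def
  proof (intro all_cong imp_cong refl)
    fix p assume p: "1 \<le> p \<and> p \<le> n"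
    have "m * p \<le> length b - 1" using p lb by simp
    then show "ten b (m * p) \<le> p - 1 \<longleftrightarrow> cb (take (m * p) (dl b)) + (if b ! 0 then 1 else 0) \<le> 2 * p - 1"
      using ten_le_iff[of p b "m * p"] p chg_cb by simp
  qed
  finally have 1: "(\<forall>j. 1 \<le> j \<and> j \<le> length (occ10 b) \<longrightarrow> occ10 b ! (j - 1) \<ge> m * j + 1) \<longleftrightarrow> G m n (b ! 0) (dl b)" .
  have "changes b = cb (dl b)"
    using changes_chg[of b] chg_cb[of "length b - 1" b] by simp
  then show ?thesis using 1 by simp
qed

lemma a_count_split:
  assumes n: "n \<ge> 1"
  shows "a_count n s r = card {d. length d = (s + 2) * n \<and> G (s + 2) n True d \<and> cb d \<le> r}
                       + card {d. length d = (s + 2) * n \<and> G (s + 2) n False d \<and> cb d \<le> r}"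
proof -
  define m where "m = s + 2"
  define A where "A = {b :: bool list. length b = m * n + 1 \<and>
     (\<forall>j. 1 \<le> j \<and> j \<le> length (occ10 b) \<longrightarrow> occ10 b ! (j - 1) \<ge> m * j + 1) \<and> changes b \<le> r}"
  define T where "T = Sigma UNIV (\<lambda>x. {d. length d = m * n \<and> G m n x d \<and> cb d \<le> r})"
  define psi where "psi b = (b ! 0, dl b)" for b
  have ac: "a_count n s r = card A" unfolding a_count_def A_def m_def by simp
  have inj: "inj_on psi A"
  proof (rule inj_onI)
    fix a b assume a: "a \<in> A" and b: "b \<in> A" and e: "psi a = psi b"
    have "length a = m * n + 1" "length b = m * n + 1" using a b unfolding A_def by blast+
    then have "a \<noteq> []" "b \<noteq> []" by auto
    moreover have e1: "a ! 0 = b ! 0" and e2: "dl a = dl b" using e unfolding psi_def by auto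
    ultimately have "a = mk (a ! 0) (dl a)" "b = mk (b ! 0) (dl b)" using mk_dl by metis+
    then show "a = b" unfolding e1 e2 by (rule trans[OF _ sym])
  qed
  have img: "psi ` A = T"
  proof
    show "psi ` A \<subseteq> T"
    proof
      fix y assume "y \<in> psi ` A"
      then obtain b where b: "b \<in> A" "y = psi b" by blast
      have lb: "length b = m * n + 1" using b unfolding A_def by blast
      have "G m n (b ! 0) (dl b) \<and> cb (dl b) \<le> r" using b(1) mem_iff[OF n lb, of r] unfolding A_def by simp
      moreover have "length (dl b) = m * n" using lb by simp
      ultimately show "y \<in> T" using b(2) unfolding T_def psi_def by simp
    qed
    show "T \<subseteq> psi ` A"
    proof
      fix y assume y: "y \<in> T"
      obtain x d where xd: "y = (x, d)" by (cases y)
      have d: "length d = m * n" "G m n x d" "cb d \<le> r" using y xd unfolding T_def by auto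
      define b where "b = mk x d"
      have lb: "length b = m * n + 1" using d unfolding b_def by simp
      have "b \<in> A" using mem_iff[OF n lb, of r] d lb unfolding A_def b_def by simp
      moreover have "y = psi b" unfolding psi_def b_def xd by simp
      ultimately show "y \<in> psi ` A" by blast
    qed
  qed
  have "card A = card T" using card_image[OF inj] img by simp
  also have "\<dots> = card {d. length d = m * n \<and> G m n True d \<and> cb d \<le> r}
                  + card {d. length d = m * n \<and> G m n False d \<and> cb d \<le> r}"
  proof -
    have fin: "finite {d. length d = m * n \<and> G m n x d \<and> cb d \<le> r}" for x
      using finite_len[of "m * n" "\<lambda>d. G m n x d \<and> cb d \<le> r"] by simp
    have "card T = (\<Sum>x\<in>UNIV. card {d. length d = m * n \<and> G m n x d \<and> cb d \<le> r})"
      unfolding T_def using fin by (intro card_SigmaI) auto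
    also have "\<dots> = card {d. length d = m * n \<and> G m n True d \<and> cb d \<le> r}
                  + card {d. length d = m * n \<and> G m n False d \<and> cb d \<le> r}"
      by (simp add: UNIV_bool)
    finally show ?thesis .
  qed
  finally show ?thesis using ac m_def by simp
qed

lemma card_le_split:
  "card {d :: bool list. length d = N \<and> P d \<and> cb d \<le> r} = (\<Sum>k\<le>r. card {d. (length d = N \<and> cb d = k) \<and> P d})"
proof (induction r)
  case 0
  have "{d :: bool list. length d = N \<and> P d \<and> cb d \<le> 0} = {d. (length d = N \<and> cb d = 0) \<and> P d}" by auto
  then show ?case by simp
next
  case (Suc r)
  have e: "{d :: bool list. length d = N \<and> P d \<and> cb d \<le> Suc r}
     = {d. length d = N \<and> P d \<and> cb d \<le> r} \<union> {d. (length d = N \<and> cb d = Suc r) \<and> P d}"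
    by auto
  have "card {d :: bool list. length d = N \<and> P d \<and> cb d \<le> Suc r}
      = card {d. length d = N \<and> P d \<and> cb d \<le> r} + card {d. (length d = N \<and> cb d = Suc r) \<and> P d}"
    unfolding e
    using finite_len[of N "\<lambda>d. P d \<and> cb d \<le> r"] finite_len[of N "\<lambda>d. cb d = Suc r \<and> P d"] by (intro card_Un_disjoint) auto
  then show ?case using Suc by simp
qed

lemma final_alg:
  fixes g :: "nat \<Rightarrow> nat" and n s r :: nat
  assumes n: "n \<ge> 1" and hg: "\<And>k. k \<le> 2 * n \<Longrightarrow> n * g k = (2 * n - k) * ((s + 2) * n choose k)"
    and r: "r \<le> 2 * n"
  shows "int (\<Sum>k\<le>r. g k) = 2 * int (((s + 2) * n - 1) choose r)
           - (int s - 2) * (\<Sum>i<r. int (((s + 2) * n - 1) choose i))"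
  using r
proof (induction r)
  case 0
  have "n * g 0 = n * 2" using hg[of 0] by (simp add: mult.commute)
  then have "g 0 = 2" using n by simp
  then show ?case by simp
next
  case (Suc r)
  define M where "M = (s + 2) * n - 1"
  have NM: "(s + 2) * n = Suc M" unfolding M_def using n by (simp add: Suc_diff_1)
  have IH: "int (\<Sum>k\<le>r. g k) = 2 * int (M choose r) - (int s - 2) * (\<Sum>i<r. int (M choose i))"
    using Suc M_def by simp
  have h: "n * g (Suc r) = (2 * n - Suc r) * (Suc M choose Suc r)" using hg[OF Suc.prems] NM by simp
  have b1: "Suc M choose Suc r = (M choose r) + (M choose Suc r)" by simp
  have b2: "Suc r * (Suc M choose Suc r) = Suc M * (M choose r)" by (rule Suc_times_binomial)
  have d: "int (2 * n - Suc r) = 2 * int n - int (Suc r)" using Suc.prems by (simp add: of_nat_diff)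
  have "int n * int (g (Suc r)) = int (2 * n - Suc r) * int (Suc M choose Suc r)"
    using h by (metis of_nat_mult)
  also have "\<dots> = (2 * int n - int (Suc r)) * int (Suc M choose Suc r)" by (simp only: d)
  also have "\<dots> = 2 * int n * int (Suc M choose Suc r) - int (Suc r * (Suc M choose Suc r))"
    by (simp add: algebra_simps)
  also have "\<dots> = 2 * int n * (int (M choose r) + int (M choose Suc r)) - int (s + 2) * int n * int (M choose r)"
  proof -
    have e1: "int (Suc M choose Suc r) = int (M choose r) + int (M choose Suc r)" using b1 by simp
    have e2: "int (Suc r * (Suc M choose Suc r)) = int (s + 2) * int n * int (M choose r)"
    proof -
      have b3: "Suc r * (Suc M choose Suc r) = (s + 2) * n * (M choose r)" using b2 NM by simp
      show ?thesis unfolding b3 by (simp add: algebra_simps)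
    qed
    show ?thesis by (simp only: e1 e2)
  qed
  also have "\<dots> = int n * (2 * int (M choose Suc r) - int s * int (M choose r))"
    by (simp add: algebra_simps)
  finally have "int (g (Suc r)) = 2 * int (M choose Suc r) - int s * int (M choose r)"
    using n by simp
  then show ?case using IH unfolding M_def[symmetric] by (simp add: algebra_simps)
qed

theorem theorem1p3:
  fixes n s r :: nat
  assumes "n \<ge> 1" and "r \<le> 2 * n"
  shows "int (a_count n s r) =
           2 * int (((s + 2) * n - 1) choose r)
           - (int s - 2) * (\<Sum>i<r. int (((s + 2) * n - 1) choose i))"
proof -
  define m where "m = s + 2"
  define g where "g k = card {d. (length d = m * n \<and> cb d = k) \<and> G m n False d}
                      + card {d. (length d = m * n \<and> cb d = k) \<and> G m n True d}" for k
  have "a_count n s r = card {d. length d = m * n \<and> G m n True d \<and> cb d \<le> r}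
                       + card {d. length d = m * n \<and> G m n False d \<and> cb d \<le> r}"
    using a_count_split[OF assms(1)] unfolding m_def .
  also have "\<dots> = (\<Sum>k\<le>r. g k)"
    unfolding card_le_split g_def by (simp add: sum.distrib)
  finally have ac: "a_count n s r = (\<Sum>k\<le>r. g k)" .
  have hg: "n * g k = (2 * n - k) * ((s + 2) * n choose k)" if "k \<le> 2 * n" for k
    using main_count[OF assms(1) that, of m] unfolding g_def m_def by simp
  show ?thesis unfolding ac by (rule final_alg[OF assms(1) hg assms(2)])
qed

end
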